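(* Let $\Phi:(X,d^X,\mu,T)\to(Y,d^Y,\nu,S)$ be a Borel factor map of compact model p.-p. systems, and let $\alpha>1$, $\delta>0$ and $\kappa>\kappa'>0$. Then for every $\alpha_1\in[1,\alpha)$ there exist $\kappa_1\in(\kappa',\kappa)$ and $\delta_1\in(0,\delta)$ such that \[\mathrm{BICOV}_{\alpha_1,\kappa_1,\kappa',\delta_1N}\big(X,d^{\mathbf{X}}_{[-N;0)},d^{\mathbf{X}}_{[0;N)},\mu\big)\ \ge\ \mathrm{BICOV}_{\alpha,\kappa,\kappa',\delta N}\big(Y,d^{\mathbf{Y}}_{[-N;0)},d^{\mathbf{Y}}_{[0;N)},\nu\big)\] for all sufficiently large $N$.
   Context: A compact model p.-p. system $(X,d^X,\mu,T)$: $(X,d^X)$ compact metric space, $T$ a homeomorphism, $\mu$ a $T$-invariant Borel probability. For finite $F\subseteq\mathbb{Z}$, $d^{\mathbf{X}}_F(x,x')=\sum_{n\in F}d^X(T^nx,T^nx')$. A Borel factor map is a Borel map $\Phi$ with $\Phi\circ T=S\circ\Phi$ $\mu$-a.e. and $\Phi_*\mu=\nu$ (not necessarily continuous). $B^d_r(x)=\{y:d(x,y)<r\}$, $B^d_r(F)=\bigcup_{x\in F}B^d_r(x)$. For a standard Borel space with totally bounded Borel pseudometrics $d_1,d_2$ and finite measure $\mu$: $\mathrm{bicov}_a((X,d_1,d_2,\mu),\delta)=\min\{|F|:F\subseteq X,\ \mu(B^{d_2}_\delta(B^{d_1}_\delta(F)))>a\}$; for $U\subseteq X$, $(U,d_1,d_2,\mu')$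 means $U$ with restricted pseudometrics (balls taken inside $U$) and unnormalized restriction of $\mu'$. $\mathrm{BICOV}_{\alpha,\kappa,\kappa',\delta}(X,d_1,d_2,\mu)=\min_{\mu'}\max_{U:\mu'(U)\ge\kappa}\mathrm{bicov}_{\kappa'}((U,d_1,d_2,\mu'),\delta)$, minimum over Borel probabilities $\mu'$ with $\|d\mu'/d\mu\|_\infty\le\alpha$, maximum over Borel $U\subseteq X$. *)

theory Defs
  imports "HOL-Probability.Probability"
begin

definition cmpp_system :: "'a::metric_space measure \<Rightarrow> ('a \<Rightarrow> 'a) \<Rightarrow> ('a \<Rightarrow> 'a) \<Rightarrow> bool" where
  "cmpp_system mu T Tinv \<longleftrightarrow>
     compact (UNIV :: 'a set) \<and>
     homeomorphism UNIV UNIV T Tinv \<and>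
     sets mu = sets borel \<and> prob_space mu \<and> distr mu mu T = mu"

definition iter_int :: "('a \<Rightarrow> 'a) \<Rightarrow> ('a \<Rightarrow> 'a) \<Rightarrow> int \<Rightarrow> 'a \<Rightarrow> 'a" where
  "iter_int T Tinv n = (if n \<ge> 0 then T ^^ nat n else Tinv ^^ nat (- n))"

definition dyn_dist :: "('a::metric_space \<Rightarrow> 'a) \<Rightarrow> ('a \<Rightarrow> 'a) \<Rightarrow> int set \<Rightarrow> 'a \<Rightarrow> 'a \<Rightarrow> real" where
  "dyn_dist T Tinv F x x' = (\<Sum>n\<in>F. dist (iter_int T Tinv n x) (iter_int T Tinv n x'))"

definition borel_factor_map ::
  "'a::metric_space measure \<Rightarrow> ('a \<Rightarrow> 'a) \<Rightarrow> 'b::metric_space measure \<Rightarrow> ('b \<Rightarrow> 'b) \<Rightarrow> ('a \<Rightarrow> 'b) \<Rightarrow> bool" where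
  "borel_factor_map mu T nu S Phi \<longleftrightarrow>
     Phi \<in> measurable mu nu \<and> (AE x in mu. Phi (T x) = S (Phi x)) \<and> distr mu nu Phi = nu"

definition nbhd_in :: "'a set \<Rightarrow> ('a \<Rightarrow> 'a \<Rightarrow> real) \<Rightarrow> real \<Rightarrow> 'a set \<Rightarrow> 'a set" where
  "nbhd_in U d r F = {y \<in> U. \<exists>x\<in>F. d x y < r}"

text \<open>bicov_a((U,d1,d2,M),delta): minimal size of finite F in U with
  M(B^{d2}_delta(B^{d1}_delta(F))) > a (M restricted to U, unnormalised).\<close>
definition bicov :: "real \<Rightarrow> 'a set \<Rightarrow> ('a \<Rightarrow> 'a \<Rightarrow> real) \<Rightarrow> ('a \<Rightarrow> 'a \<Rightarrow> real) \<Rightarrow> 'a measure \<Rightarrow> real \<Rightarrow> enat" where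
  "bicov a U d1 d2 M \<delta> =
     Inf {enat (card F) | F. finite F \<and> F \<subseteq> U \<and>
            measure M (nbhd_in U d2 \<delta> (nbhd_in U d1 \<delta> F)) > a}"

definition BICOV :: "real \<Rightarrow> real \<Rightarrow> real \<Rightarrow> real \<Rightarrow> ('a \<Rightarrow> 'a \<Rightarrow> real) \<Rightarrow> ('a \<Rightarrow> 'a \<Rightarrow> real) \<Rightarrow> 'a measure \<Rightarrow> enat" where
  "BICOV \<alpha> \<kappa> \<kappa>' \<delta> d1 d2 M =
     (INF M' \<in> {M'. prob_space M' \<and>
                 (\<exists>f \<in> borel_measurable M. M' = density M f \<and> (AE x in M. f x \<le> ennreal \<alpha>))}.
        SUP U \<in> {U \<in> sets M'. measure M' U \<ge> \<kappa>}. bicov \<kappa>' U d1 d2 M' \<delta>)"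

end

theory Submission imports Defs begin

lemma density_AE_bound:
  assumes fin: "finite_measure N" and g[measurable]: "g \<in> borel_measurable N" and a: "0 \<le> a"
   and le: "\<And>A. A \<in> sets N \<Longrightarrow> emeasure (density N g) A \<le> ennreal a * emeasure N A"
  shows "AE x in N. g x \<le> ennreal a"
proof (rule AE_upper_bound_inf_ennreal)
  fix e::real assume e: "e > 0"
  define A where "A = {x\<in>space N. ennreal (a+e) \<le> g x}"
  have A[measurable]: "A \<in> sets N" unfolding A_def by measurable
  have "ennreal (a+e) * emeasure N A = (\<integral>\<^sup>+x. ennreal (a+e) * indicator A x \<partial>N)"
    by (simp add: nn_integral_cmult_indicator A)
  also have "\<dots> \<le> (\<integral>\<^sup>+x. g x * indicator A x \<partial>N)"
    by (intro nn_integral_mono) (auto simp: A_def indicator_def)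
  also have "\<dots> = emeasure (density N g) A" by (simp add: emeasure_density)
  also have "\<dots> \<le> ennreal a * emeasure N A" by (rule le[OF A])
  finally have 1: "ennreal (a+e) * emeasure N A \<le> ennreal a * emeasure N A" .
  have m: "emeasure N A = ennreal (measure N A)"
    using fin finite_measure.emeasure_eq_measure by blast
  have "ennreal ((a+e) * measure N A) = ennreal (a+e) * emeasure N A"
    using a e by (simp add: m ennreal_mult del: ennreal_plus)
  moreover have "ennreal (a * measure N A) = ennreal a * emeasure N A"
    using a e by (simp add: m ennreal_mult)
  ultimately have "ennreal ((a+e) * measure N A) \<le> ennreal (a * measure N A)"
    using 1 by simp
  hence "(a+e) * measure N A \<le> a * measure N A"
    using a by (subst (asm) ennreal_le_iff) auto
  hence "e * measure N A \<le> 0" by (simp add: algebra_simps)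
  hence "measure N A = 0" using e measure_nonneg[of N A] by (simp add: mult_le_0_iff)
  hence "A \<in> null_sets N" using m by (simp add: null_sets_def)
  moreover have "{x\<in>space N. \<not> g x \<le> ennreal a + ennreal e} \<subseteq> A"
    using a e by (auto simp: A_def)
  ultimately show "AE x in N. g x \<le> ennreal a + ennreal e" by (rule AE_I')
qed

lemma nbhd_in_borel:
  assumes "U \<in> sets borel" and "\<And>y. continuous_on UNIV (e y)"
  shows "nbhd_in U e r W \<in> sets borel"
proof -
  have "nbhd_in U e r W = U \<inter> (\<Union>x\<in>W. {y. e x y < r})" by (auto simp: nbhd_in_def)
  moreover have "open (\<Union>x\<in>W. {y. e x y < r})"
    using assms(2) by (intro open_UN ballI open_Collect_less) (auto intro: continuous_intros)
  ultimately show ?thesis using assms(1) by auto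
qed

lemma bicov_compare:
  fixes mu :: "'a::metric_space measure" and nu :: "'b::metric_space measure" and Phi :: "'a \<Rightarrow> 'b"
  assumes mu: "prob_space mu" "sets mu = sets borel"
    and nu: "prob_space nu" "sets nu = sets borel"
    and Phi: "Phi \<in> measurable mu nu" "distr mu nu Phi = nu"
    and G: "G \<in> sets borel" "measure mu (-G) \<le> \<eta>"
    and par: "0 \<le> \<eta>" "1 \<le> \<alpha>1" "0 < \<alpha>" "\<alpha>1/\<alpha> \<le> 1 - \<alpha>1*\<eta>" "0 \<le> \<kappa>" "\<kappa>1 \<le> (1 - \<alpha>1*\<eta>) * \<kappa>"
    and good1: "\<And>x x'. x\<in>G \<Longrightarrow> x'\<in>G \<Longrightarrow> d1 x x' < r \<Longrightarrow> e1 (Phi x) (Phi x') < s"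
    and good2: "\<And>x x'. x\<in>G \<Longrightarrow> x'\<in>G \<Longrightarrow> d2 x x' < r \<Longrightarrow> e2 (Phi x) (Phi x') < s"
    and cont: "\<And>y. continuous_on UNIV (e1 y)" "\<And>y. continuous_on UNIV (e2 y)"
  shows "BICOV \<alpha> \<kappa> \<kappa>' s e1 e2 nu \<le> BICOV \<alpha>1 \<kappa>1 \<kappa>' r d1 d2 mu"
proof -
  interpret mu: prob_space mu by fact
  interpret nu: prob_space nu by fact
  have spmu: "space mu = UNIV" using sets_eq_imp_space_eq[OF mu(2)] by simp
  have spnu: "space nu = UNIV" using sets_eq_imp_space_eq[OF nu(2)] by simp
  have Phib: "Phi \<in> borel_measurable borel" using Phi(1) mu(2) nu(2)
    by (metis measurable_cong_sets)
  show ?thesis unfolding BICOV_def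
  proof (rule INF_greatest)
    fix MX assume "MX \<in> {M'. prob_space M' \<and> (\<exists>f \<in> borel_measurable mu. M' = density mu f \<and> (AE x in mu. f x \<le> ennreal \<alpha>1))}"
    then obtain f where MX: "prob_space MX" and f[measurable]: "f \<in> borel_measurable mu"
      and MXd: "MX = density mu f" and fAE: "AE x in mu. f x \<le> ennreal \<alpha>1" by auto
    interpret MX: prob_space MX by fact
    have setsMX: "sets MX = sets borel" using MXd mu(2) by simp
    have spMX: "space MX = UNIV" using sets_eq_imp_space_eq[OF setsMX] by simp
    have eMX: "emeasure MX A \<le> ennreal \<alpha>1 * emeasure mu A" if A: "A \<in> sets borel" for A
    proof -
      have A': "A \<in> sets mu" using A mu(2) by simp
      have "emeasure MX A = (\<integral>\<^sup>+x. f x * indicator A x \<partial>mu)" using A' by (simp add: MXd emeasure_density)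
      also have "\<dots> \<le> (\<integral>\<^sup>+x. ennreal \<alpha>1 * indicator A x \<partial>mu)"
        using fAE by (intro nn_integral_mono_AE) (auto simp: indicator_def)
      also have "\<dots> = ennreal \<alpha>1 * emeasure mu A" using A' by (simp add: nn_integral_cmult_indicator)
      finally show ?thesis .
    qed
    have mMX: "measure MX A \<le> \<alpha>1 * measure mu A" if A: "A \<in> sets borel" for A
    proof -
      have "ennreal (measure MX A) \<le> ennreal (\<alpha>1 * measure mu A)"
        using eMX[OF A] par(2) by (simp add: MX.emeasure_eq_measure mu.emeasure_eq_measure ennreal_mult)
      then show ?thesis using par(2) by (subst (asm) ennreal_le_iff) auto
    qed
    define c where "c = measure MX G"
    have "measure MX (-G) \<le> \<alpha>1 * \<eta>"
    proof -
      have "measure MX (-G) \<le> \<alpha>1 * measure mu (-G)" using mMX[of "-G"] G by auto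
      also have "\<dots> \<le> \<alpha>1 * \<eta>" using G(2) par(2) by (intro mult_left_mono) auto
      finally show ?thesis .
    qed
    moreover have "measure MX G = 1 - measure MX (-G)"
      using MX.prob_compl[of "-G"] G setsMX spMX by (simp add: Compl_eq_Diff_UNIV double_diff)
    ultimately have c_ge: "1 - \<alpha>1 * \<eta> \<le> c" unfolding c_def by simp
    have "0 < \<alpha>1/\<alpha>" using par by simp
    hence cpos: "0 < c" using c_ge par(4) by linarith
    have c1: "c \<le> 1" unfolding c_def by simp
    have \<alpha>c: "\<alpha>1 / c \<le> \<alpha>"
    proof -
      have "\<alpha>1/\<alpha> \<le> c" using par(4) c_ge by linarith
      hence "\<alpha>1 \<le> c * \<alpha>" using par(3) by (simp add: divide_le_eq)
      thus ?thesis using cpos by (simp add: divide_le_eq mult.commute)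
    qed
    have PhiMX: "Phi \<in> measurable MX nu" using Phi(1) setsMX mu(2) by (metis measurable_cong_sets)
    define MY where "MY = distr (density MX (\<lambda>x. ennreal (indicator G x / c))) nu Phi"
    have setsMY: "sets MY = sets borel" using nu(2) by (simp add: MY_def)
    have spMY: "space MY = UNIV" using sets_eq_imp_space_eq[OF setsMY] by simp
    have eMY: "emeasure MY A = ennreal (measure MX (Phi -` A \<inter> G) / c)" if A: "A \<in> sets borel" for A
    proof -
      have A': "A \<in> sets nu" using A nu(2) by simp
      have PhiA: "Phi -` A \<in> sets MX" using measurable_sets[OF Phib A] setsMX by simp
      have GMX: "G \<in> sets MX" using G setsMX by simp
      have "emeasure MY A = emeasure (density MX (\<lambda>x. ennreal (indicator G x / c))) (Phi -` A)"
        unfolding MY_def using A' PhiMX by (subst emeasure_distr) (auto simp: spMX)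
      also have "\<dots> = (\<integral>\<^sup>+x. ennreal (indicator G x / c) * indicator (Phi -` A) x \<partial>MX)"
        using PhiA GMX by (subst emeasure_density) (auto intro!: measurable_compose[OF _ measurable_ennreal])
      also have "\<dots> = (\<integral>\<^sup>+x. ennreal (1/c) * indicator (Phi -` A \<inter> G) x \<partial>MX)"
        by (intro nn_integral_cong) (auto simp: indicator_def)
      also have "\<dots> = ennreal (1/c) * emeasure MX (Phi -` A \<inter> G)"
        using PhiA GMX by (intro nn_integral_cmult_indicator) auto
      also have "\<dots> = ennreal (measure MX (Phi -` A \<inter> G) / c)"
        using cpos by (simp add: MX.emeasure_eq_measure ennreal_mult[symmetric])
      finally show ?thesis .
    qed
    have mMY: "measure MY A = measure MX (Phi -` A \<inter> G) / c" if A: "A \<in> sets borel" for A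
      using eMY[OF A] cpos by (simp add: measure_def)
    have MYprob: "prob_space MY"
      by (rule prob_spaceI) (use cpos in \<open>simp add: spMY eMY c_def\<close>)
    interpret MY: prob_space MY by fact
    have MYbnd: "measure MY A \<le> \<alpha> * measure nu A" if Ab: "A \<in> sets borel" for A
    proof -
      have PhiA: "Phi -` A \<in> sets borel" using measurable_sets[OF Phib Ab] by simp
      have mn: "measure nu A = measure mu (Phi -` A)"
        using measure_distr[OF Phi(1), of A] Ab nu(2) Phi(2) spmu by simp
      have "measure MX (Phi -` A \<inter> G) \<le> measure MX (Phi -` A)"
        using PhiA setsMX by (intro MX.finite_measure_mono) auto
      also have "\<dots> \<le> \<alpha>1 * measure nu A" using mMX[OF PhiA] mn by simp
      finally have "measure MY A \<le> \<alpha>1 * measure nu A / c"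
        using mMY[OF Ab] cpos by (simp add: divide_right_mono)
      also have "\<dots> = (\<alpha>1 / c) * measure nu A" by simp
      also have "\<dots> \<le> \<alpha> * measure nu A" using \<alpha>c by (intro mult_right_mono) auto
      finally show ?thesis .
    qed
    have ac: "absolutely_continuous nu MY"
    proof (unfold absolutely_continuous_def, rule subsetI)
      fix B assume B: "B \<in> null_sets nu"
      hence Bb: "B \<in> sets borel" using nu(2) by auto
      have "measure nu B = 0" using B by (simp add: nu.emeasure_eq_measure null_sets_def)
      hence "measure MY B \<le> 0" using MYbnd[OF Bb] by simp
      hence "emeasure MY B = 0" by (simp add: MY.emeasure_eq_measure measure_le_0_iff)
      then show "B \<in> null_sets MY" using Bb setsMY by (simp add: null_sets_def)
    qed
    have dens: "density nu (RN_deriv nu MY) = MY"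
      using ac setsMY nu(2) by (intro nu.density_RN_deriv) auto
    have RNAE: "AE x in nu. RN_deriv nu MY x \<le> ennreal \<alpha>"
    proof (rule density_AE_bound)
      show "finite_measure nu" by (rule nu.finite_measure_axioms)
      show "RN_deriv nu MY \<in> borel_measurable nu" by simp
      show "0 \<le> \<alpha>" using par(3) by simp
      fix A assume A: "A \<in> sets nu"
      then show "emeasure (density nu (RN_deriv nu MY)) A \<le> ennreal \<alpha> * emeasure nu A"
        using MYbnd[of A] nu(2) par(3) unfolding dens
        by (simp add: MY.emeasure_eq_measure nu.emeasure_eq_measure ennreal_mult[symmetric])
    qed
    have MYin: "MY \<in> {M'. prob_space M' \<and> (\<exists>f \<in> borel_measurable nu. M' = density nu f \<and> (AE x in nu. f x \<le> ennreal \<alpha>))}"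
      using MYprob dens RNAE by (auto intro!: bexI[of _ "RN_deriv nu MY"])
    show "(INF M'\<in>{M'. prob_space M' \<and> (\<exists>f \<in> borel_measurable nu. M' = density nu f \<and> (AE x in nu. f x \<le> ennreal \<alpha>))}.
        SUP U \<in> {U \<in> sets M'. measure M' U \<ge> \<kappa>}. bicov \<kappa>' U e1 e2 M' s)
       \<le> (SUP U \<in> {U \<in> sets MX. measure MX U \<ge> \<kappa>1}. bicov \<kappa>' U d1 d2 MX r)"
    proof (rule INF_lower2[OF MYin], rule SUP_least)
      fix UY assume UY: "UY \<in> {U \<in> sets MY. measure MY U \<ge> \<kappa>}"
      hence UYb: "UY \<in> sets borel" and UYk: "\<kappa> \<le> measure MY UY" using setsMY by auto
      define UX where "UX = Phi -` UY \<inter> G"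
      have UXb: "UX \<in> sets borel" unfolding UX_def using measurable_sets[OF Phib UYb] G by auto
      have "measure MX UX = c * measure MY UY" using mMY[OF UYb] cpos by (simp add: UX_def)
      moreover have "(1 - \<alpha>1*\<eta>) * \<kappa> \<le> c * \<kappa>" using c_ge par(5) by (simp add: mult_right_mono)
      moreover have "c * \<kappa> \<le> c * measure MY UY" using UYk cpos by simp
      ultimately have UXk: "\<kappa>1 \<le> measure MX UX" using par(6) by linarith
      have "bicov \<kappa>' UY e1 e2 MY s \<le> bicov \<kappa>' UX d1 d2 MX r"
        unfolding bicov_def
      proof (rule Inf_greatest)
        fix n assume "n \<in> {enat (card F) |F. finite F \<and> F \<subseteq> UX \<and>
            measure MX (nbhd_in UX d2 r (nbhd_in UX d1 r F)) > \<kappa>'}"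
        then obtain F where n: "n = enat (card F)" and F: "finite F" "F \<subseteq> UX"
          and Fm: "measure MX (nbhd_in UX d2 r (nbhd_in UX d1 r F)) > \<kappa>'" by auto
        define W where "W = nbhd_in UY e2 s (nbhd_in UY e1 s (Phi ` F))"
        have Wb: "W \<in> sets borel" unfolding W_def using UYb cont by (intro nbhd_in_borel)
        have PW: "Phi -` W \<inter> G \<in> sets borel" using measurable_sets[OF Phib Wb] G by auto
        have incl: "nbhd_in UX d2 r (nbhd_in UX d1 r F) \<subseteq> Phi -` W \<inter> G"
        proof
          fix z assume "z \<in> nbhd_in UX d2 r (nbhd_in UX d1 r F)"
          then obtain y x where z: "z \<in> UX" and y: "y \<in> UX" and x: "x \<in> F"
            and dxy: "d1 x y < r" and dyz: "d2 y z < r" by (auto simp: nbhd_in_def)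
          have xG: "x \<in> UX" using x F by auto
          have "e1 (Phi x) (Phi y) < s" using good1[OF _ _ dxy] xG y by (auto simp: UX_def)
          moreover have "e2 (Phi y) (Phi z) < s" using good2[OF _ _ dyz] z y by (auto simp: UX_def)
          ultimately show "z \<in> Phi -` W \<inter> G" using x y z
            by (auto simp: W_def nbhd_in_def UX_def)
        qed
        have "measure MX (nbhd_in UX d2 r (nbhd_in UX d1 r F)) \<le> measure MX (Phi -` W \<inter> G)"
          using incl PW setsMX by (intro MX.finite_measure_mono) auto
        also have "\<dots> \<le> measure MX (Phi -` W \<inter> G) / c"
          using cpos c1 by (simp add: le_divide_eq mult_left_le)
        also have "\<dots> = measure MY W" using mMY[OF Wb] by simp
        finally have "\<kappa>' < measure MY W" using Fm by simp
        hence mem: "enat (card (Phi ` F)) \<in> {enat (card F) |F. finite F \<and> F \<subseteq> UY \<and>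
            measure MY (nbhd_in UY e2 s (nbhd_in UY e1 s F)) > \<kappa>'}"
          using F by (auto simp: W_def UX_def)
        show "Inf {enat (card F) |F. finite F \<and> F \<subseteq> UY \<and>
            measure MY (nbhd_in UY e2 s (nbhd_in UY e1 s F)) > \<kappa>'} \<le> n"
          by (rule Inf_lower2[OF mem]) (simp add: n card_image_le F)
      qed
      also have "\<dots> \<le> (SUP U \<in> {U \<in> sets MX. measure MX U \<ge> \<kappa>1}. bicov \<kappa>' U d1 d2 MX r)"
        using UXb UXk setsMX by (intro SUP_upper) auto
      finally show "bicov \<kappa>' UY e1 e2 MY s \<le> (SUP U \<in> {U \<in> sets MX. measure MX U \<ge> \<kappa>1}. bicov \<kappa>' U d1 d2 MX r)" .
    qed
  qed
qed


lemma inner_closed: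
  fixes M :: "'a::metric_space measure"
  assumes cpt: "compact (UNIV::'a set)" and sM: "sets M = sets borel" and fin: "finite_measure M"
    and A: "A \<in> sets borel" and e: "e > 0"
  shows "\<exists>C. closed C \<and> C \<subseteq> A \<and> measure M (A - C) < e"
proof -
  interpret finite_measure M by fact
  have spM: "space M = UNIV" using sets_eq_imp_space_eq[OF sM] by simp
  have tb: "\<forall>\<epsilon>>0. \<exists>k. finite k \<and> k \<subseteq> (UNIV::'a set) \<and> UNIV \<subseteq> (\<Union>x\<in>k. ball x \<epsilon>)"
    using seq_compact_imp_totally_bounded[OF compact_imp_seq_compact[OF cpt]] .
  have "\<forall>m::nat. \<exists>k. finite k \<and> UNIV \<subseteq> (\<Union>x\<in>k. ball (x::'a) (1/(Suc m)))"
    using tb by simp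
  then obtain F where F: "\<And>m::nat. finite (F m) \<and> UNIV \<subseteq> (\<Union>x\<in>F m. ball (x::'a) (1/(Suc m)))"
    by metis
  define D where "D = (\<Union>m. F m)"
  have Dc: "countable D" unfolding D_def
    by (rule countable_UN) (use F in \<open>auto intro: countable_finite\<close>)
  have Dne: "D \<noteq> {}"
  proof -
    have "(undefined::'a) \<in> (\<Union>x\<in>F 0. ball x (1/Suc 0))" using F[of 0] by blast
    then obtain z where "z \<in> F 0" by blast
    thus ?thesis unfolding D_def by blast
  qed
  define d where "d = from_nat_into D"
  have dD: "range d = D" using Dne Dc by (simp add: d_def)
  have dense: "\<exists>n. dist x (d n) < \<epsilon>" if eps: "\<epsilon> > 0" for x \<epsilon>
  proof -
    obtain m where m: "inverse (real (Suc m)) < \<epsilon>" using reals_Archimedean[OF eps] by blast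
    have "x \<in> (\<Union>x\<in>F m. ball x (1/(Suc m)))" using F[of m] by blast
    then obtain y where y: "y \<in> F m" "dist y x < 1/(Suc m)" by auto
    have "y \<in> range d" using y dD unfolding D_def by auto
    then obtain n where "y = d n" by auto
    moreover have "inverse (real (Suc m)) = 1 / real (Suc m)" by (simp add: divide_inverse)
    ultimately have "dist x (d n) < \<epsilon>" using y m by (simp add: dist_commute)
    thus ?thesis by blast
  qed
  define emb :: "'a \<Rightarrow> nat \<Rightarrow> real" where "emb x = (\<lambda>n. dist x (d n))" for x
  have ce: "continuous_on UNIV emb" unfolding emb_def
    by (intro continuous_on_coordinatewise_then_product continuous_intros)
  have inj: "inj emb"
  proof (rule injI)
    fix x y assume "emb x = emb y"
    hence h: "\<And>n. dist x (d n) = dist y (d n)" unfolding emb_def by metis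
    show "x = y"
    proof (rule ccontr)
      assume "x \<noteq> y" then have p: "dist x y > 0" by simp
      obtain n where n: "dist x (d n) < dist x y / 2" using dense[of "dist x y / 2" x] p by auto
      have "dist x y \<le> dist x (d n) + dist y (d n)" by (rule dist_triangle2)
      then show False using n h[of n] by linarith
    qed
  qed
  define g where "g = inv emb"
  have gc: "continuous_on (range emb) g" using continuous_on_inv[OF ce cpt] inj by (simp add: g_def)
  define N where "N = distr M borel emb"
  have embm: "emb \<in> measurable M borel"
    using borel_measurable_continuous_onI[OF ce] measurable_cong_sets[OF sM refl] by blast
  have rc: "closed (range emb)" using compact_continuous_image[OF ce cpt] by (simp add: compact_imp_closed)
  have B: "emb ` A \<in> sets borel"
  proof -
    have eq: "emb ` A = g -` A \<inter> range emb" using inj by (auto simp: g_def)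
    have "g -` A \<inter> space (restrict_space borel (range emb)) \<in> sets (restrict_space borel (range emb))"
      using measurable_sets[OF borel_measurable_continuous_on_restrict[OF gc] A] .
    thus ?thesis using rc by (simp add: eq sets_restrict_space_iff)
  qed
  have eN: "emeasure N K = emeasure M (emb -` K)" if "K \<in> sets borel" for K
    using that embm by (simp add: N_def emeasure_distr spM)
  have reg: "emeasure N (emb ` A) = (SUP K \<in> {K. K \<subseteq> emb ` A \<and> compact K}. emeasure N K)"
  proof (rule inner_regular)
    show "sets N = sets borel" by (simp add: N_def)
    show "emeasure N (space N) \<noteq> \<infinity>" using eN[of UNIV] by (simp add: N_def emeasure_eq_measure)
    show "emb ` A \<in> sets borel" by (rule B)
  qed
  have AM: "A \<in> sets M" using A sM by simp
  show ?thesis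
  proof (cases "measure M A < e")
    case True then show ?thesis by (intro exI[of _ "{}"]) auto
  next
    case False
    have "ennreal (measure M A - e) < ennreal (measure M A)" using e False by (simp add: ennreal_less_iff)
    also have "\<dots> = emeasure N (emb ` A)" using eN[OF B] inj by (simp add: emeasure_eq_measure inj_vimage_image_eq)
    finally obtain K where K: "K \<subseteq> emb ` A" "compact K" "ennreal (measure M A - e) < emeasure N K"
      unfolding reg by (auto simp: less_SUP_iff)
    define C where "C = emb -` K"
    have Cc: "closed C" unfolding C_def using K(2) ce by (intro closed_vimage compact_imp_closed)
    have CA: "C \<subseteq> A" unfolding C_def using K(1) inj by (auto dest: injD)
    have CM: "C \<in> sets M" using Cc sM by simp
    have "ennreal (measure M A - e) < ennreal (measure M C)"
      using K(3) eN[of K] K(2) by (simp add: C_def emeasure_eq_measure compact_imp_closed)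
    hence "measure M A - e < measure M C" using False by (subst (asm) ennreal_less_iff) auto
    moreover have "measure M (A - C) = measure M A - measure M C"
      using AM CM CA by (simp add: finite_measure_Diff)
    ultimately show ?thesis using Cc CA by (intro exI[of _ C]) auto
  qed
qed


lemma separate_cc:
  fixes S T :: "'a::metric_space set"
  assumes "compact S" "closed T" "S \<inter> T = {}"
  shows "\<exists>\<delta>>0. \<forall>x\<in>S. \<forall>y\<in>T. \<delta> \<le> dist x y"
proof (cases "S = {} \<or> T = {}")
  case True then show ?thesis by (intro exI[of _ 1]) auto
next
  case False
  hence Sne: "S \<noteq> {}" and Tne: "T \<noteq> {}" by auto
  have "continuous_on S (\<lambda>x. infdist x T)" by (intro continuous_intros)
  then obtain x0 where x0: "x0 \<in> S" "\<And>y. y \<in> S \<Longrightarrow> infdist x0 T \<le> infdist y T"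
    using continuous_attains_inf[OF assms(1) Sne] by blast
  have "x0 \<notin> T" using x0(1) assms(3) by blast
  hence "infdist x0 T \<noteq> 0" using in_closed_iff_infdist_zero[OF assms(2) Tne] by simp
  hence pos: "infdist x0 T > 0" using infdist_nonneg[of x0 T] by linarith
  show ?thesis
  proof (intro exI[of _ "infdist x0 T"] conjI pos ballI)
    fix x y assume "x \<in> S" "y \<in> T"
    thus "infdist x0 T \<le> dist x y" using x0(2)[of x] infdist_le[of y T x] by linarith
  qed
qed

lemma small_partition:
  fixes \<epsilon> :: real
  assumes cY: "compact (UNIV::'b::metric_space set)" and e: "\<epsilon> > 0"
  shows "\<exists>(m::nat) (P::nat \<Rightarrow> 'b set). 0 < m \<and> (\<forall>j. P j \<in> sets borel) \<and> (\<forall>i j. i \<noteq> j \<longrightarrow> P i \<inter> P j = {})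
     \<and> (\<forall>y::'b. \<exists>j<m. y \<in> P j) \<and> (\<forall>j. \<forall>a\<in>P j. \<forall>b\<in>P j. dist a b < \<epsilon>)"
proof -
  have tb: "\<forall>\<epsilon>>0. \<exists>k. finite k \<and> k \<subseteq> (UNIV::'b set) \<and> UNIV \<subseteq> (\<Union>x\<in>k. ball x \<epsilon>)"
    using seq_compact_imp_totally_bounded[OF compact_imp_seq_compact[OF cY]] .
  have e2: "\<epsilon>/2 > 0" using e by simp
  obtain k :: "'b set" where k: "finite k" "UNIV \<subseteq> (\<Union>x\<in>k. ball x (\<epsilon>/2))"
    using tb[rule_format, OF e2] by blast
  obtain xs where xs: "set xs = k" using finite_list[OF k(1)] by blast
  define m where "m = length xs"
  define B where "B j = (if j < m then ball (xs ! j) (\<epsilon>/2) else {})" for j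
  define P where "P j = B j - (\<Union>i<j. B i)" for j
  have cov: "\<exists>j<m. y \<in> P j" for y
  proof -
    have "y \<in> (\<Union>x\<in>k. ball x (\<epsilon>/2))" using k(2) by blast
    then obtain x where "x \<in> set xs" "y \<in> ball x (\<epsilon>/2)" using xs by auto
    then obtain j0 where j0: "j0 < m" "y \<in> B j0" by (auto simp: in_set_conv_nth B_def m_def)
    define j where "j = (LEAST j. y \<in> B j)"
    have jB: "y \<in> B j" unfolding j_def using j0(2) by (rule LeastI)
    have jle: "j \<le> j0" unfolding j_def using j0(2) by (rule Least_le)
    have "\<forall>i<j. y \<notin> B i" unfolding j_def using not_less_Least by blast
    hence "y \<in> P j" using jB by (auto simp: P_def)
    thus ?thesis using jle j0(1) by (intro exI[of _ j]) auto
  qed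
  have mpos: "0 < m" using cov[of undefined] by auto
  have disj: "P i \<inter> P j = {}" if "i \<noteq> j" for i j
  proof -
    have *: "P i \<inter> P j = {}" if "i < j" for i j using that by (auto simp: P_def)
    thus ?thesis
    proof (cases "i < j")
      case False
      hence "j < i" using that by simp
      thus ?thesis using *[of j i] by (simp add: Int_commute)
    qed (use * in simp)
  qed
  have meas: "P j \<in> sets borel" for j by (auto simp: P_def B_def)
  have small: "dist a b < \<epsilon>" if "a \<in> P j" "b \<in> P j" for a b j
  proof -
    have "a \<in> B j" "b \<in> B j" using that by (auto simp: P_def)
    hence "j < m" "dist (xs!j) a < \<epsilon>/2" "dist (xs!j) b < \<epsilon>/2" by (auto simp: B_def split: if_splits)
    thus ?thesis using dist_triangle3[of a b "xs!j"] by linarith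
  qed
  show ?thesis
    by (rule exI[of _ m], rule exI[of _ P]) (use mpos meas disj cov small in presburger)
qed

lemma lusin:
  fixes mu :: "'a::metric_space measure" and Phi :: "'a \<Rightarrow> 'b::metric_space"
  assumes cX: "compact (UNIV::'a set)" and cY: "compact (UNIV::'b set)"
    and sM: "sets mu = sets borel" and fin: "finite_measure mu"
    and Phi: "Phi \<in> borel_measurable borel" and e: "\<epsilon> > 0" and eta: "\<eta> > 0"
  shows "\<exists>K \<rho>. closed K \<and> \<rho> > 0 \<and> measure mu (-K) < \<eta> \<and>
     (\<forall>a\<in>K. \<forall>b\<in>K. dist a b < \<rho> \<longrightarrow> dist (Phi a) (Phi b) < \<epsilon>)"
proof -
  interpret finite_measure mu by fact
  obtain m :: nat and P :: "nat \<Rightarrow> 'b set" where mpos: "0 < m" and Pm: "\<And>j. P j \<in> sets borel"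
    and Pd: "\<And>i j. i \<noteq> j \<Longrightarrow> P i \<inter> P j = {}" and Pc: "\<And>y::'b. \<exists>j<m. y \<in> P j"
    and Ps: "\<And>j a b. a \<in> P j \<Longrightarrow> b \<in> P j \<Longrightarrow> dist a b < \<epsilon>"
  proof -
    from small_partition[OF cY e] obtain m :: nat and P :: "nat \<Rightarrow> 'b set" where
      "0 < m \<and> (\<forall>j. P j \<in> sets borel) \<and> (\<forall>i j. i \<noteq> j \<longrightarrow> P i \<inter> P j = {})
     \<and> (\<forall>y::'b. \<exists>j<m. y \<in> P j) \<and> (\<forall>j. \<forall>a\<in>P j. \<forall>b\<in>P j. dist a b < \<epsilon>)" by (elim exE)
    note h = this
    show ?thesis
    proof (rule that)
      show "0 < m" using h by simp
      show "\<And>j. P j \<in> sets borel" using h by simp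
      show "\<And>i j. i \<noteq> j \<Longrightarrow> P i \<inter> P j = {}" using h by simp
      show "\<And>y. \<exists>j<m. y \<in> P j" using h by simp
      show "\<And>j a b. a \<in> P j \<Longrightarrow> b \<in> P j \<Longrightarrow> dist a b < \<epsilon>" using h by simp
    qed
  qed
  define A where "A j = Phi -` P j" for j
  have Am: "A j \<in> sets borel" for j unfolding A_def using measurable_sets[OF Phi Pm] by simp
  have "\<forall>j. \<exists>C. closed C \<and> C \<subseteq> A j \<and> measure mu (A j - C) < \<eta> / m"
    using inner_closed[OF cX sM fin Am] eta mpos by simp
  hence "\<exists>C. \<forall>j. closed (C j) \<and> C j \<subseteq> A j \<and> measure mu (A j - C j) < \<eta> / m"
    by (rule choice)
  then obtain C where C0: "\<forall>j. closed (C j) \<and> C j \<subseteq> A j \<and> measure mu (A j - C j) < \<eta> / m"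
    by blast
  have C: "\<And>j. closed (C j)" "\<And>j. C j \<subseteq> A j" "\<And>j. measure mu (A j - C j) < \<eta> / m"
    using C0 by auto
  define K where "K = (\<Union>j<m. C j)"
  have Kc: "closed K" unfolding K_def using C(1) by auto
  have sub: "-K \<subseteq> (\<Union>j<m. A j - C j)"
  proof
    fix x assume "x \<in> -K"
    obtain j where "j < m" "Phi x \<in> P j" using Pc by blast
    thus "x \<in> (\<Union>j<m. A j - C j)" using \<open>x \<in> -K\<close> by (auto simp: K_def A_def)
  qed
  have Cm: "C j \<in> sets borel" for j using C(1) by simp
  have "measure mu (-K) \<le> measure mu (\<Union>j<m. A j - C j)"
    using sub Am Cm sM by (intro finite_measure_mono) auto
  also have "\<dots> \<le> (\<Sum>j<m. measure mu (A j - C j))"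
    using Am Cm sM by (intro finite_measure_subadditive_finite) auto
  also have "\<dots> < (\<Sum>j<m. \<eta> / m)" using C(3) mpos by (intro sum_strict_mono) auto
  also have "\<dots> = \<eta>" using mpos by simp
  finally have Km: "measure mu (-K) < \<eta>" .
  have "\<forall>j. \<exists>\<delta>>0. \<forall>x\<in>C j. \<forall>y\<in>(\<Union>i\<in>{i. i<m \<and> i\<noteq>j}. C i). \<delta> \<le> dist x y"
  proof
    fix j
    show "\<exists>\<delta>>0. \<forall>x\<in>C j. \<forall>y\<in>(\<Union>i\<in>{i. i<m \<and> i\<noteq>j}. C i). \<delta> \<le> dist x y"
    proof (rule separate_cc)
      show "compact (C j)" using closed_Int_compact[OF C(1) cX] by simp
      show "closed (\<Union>i\<in>{i. i<m \<and> i\<noteq>j}. C i)" using C(1) by (intro closed_UN) auto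
      show "C j \<inter> (\<Union>i\<in>{i. i<m \<and> i\<noteq>j}. C i) = {}"
      proof (rule ccontr)
        assume "C j \<inter> (\<Union>i\<in>{i. i<m \<and> i\<noteq>j}. C i) \<noteq> {}"
        then obtain x i where "x \<in> C j" "x \<in> C i" "i \<noteq> j" by blast
        hence "Phi x \<in> P j \<inter> P i" using C(2) by (auto simp: A_def)
        thus False using Pd[OF \<open>i \<noteq> j\<close>] by blast
      qed
    qed
  qed
  hence "\<exists>\<delta>. \<forall>j. \<delta> j > 0 \<and> (\<forall>x\<in>C j. \<forall>y\<in>(\<Union>i\<in>{i. i<m \<and> i\<noteq>j}. C i). \<delta> j \<le> dist x y)"
    by (rule choice)
  then obtain \<delta> where \<delta>0: "\<forall>j. \<delta> j > 0 \<and> (\<forall>x\<in>C j. \<forall>y\<in>(\<Union>i\<in>{i. i<m \<and> i\<noteq>j}. C i). \<delta> j \<le> dist x y)"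
    by blast
  have \<delta>: "\<And>j. \<delta> j > 0" "\<And>j x y. x \<in> C j \<Longrightarrow> y \<in> (\<Union>i\<in>{i. i<m \<and> i\<noteq>j}. C i) \<Longrightarrow> \<delta> j \<le> dist x y"
    using \<delta>0 by auto
  define \<rho> where "\<rho> = Min (\<delta> ` {..<m})"
  have \<rho>pos: "\<rho> > 0" unfolding \<rho>_def using \<delta>(1) mpos by (subst Min_gr_iff) auto
  have \<rho>le: "\<rho> \<le> \<delta> j" if "j < m" for j unfolding \<rho>_def using that by (intro Min_le) auto
  have good: "dist (Phi a) (Phi b) < \<epsilon>" if ab: "a \<in> K" "b \<in> K" "dist a b < \<rho>" for a b
  proof -
    obtain j where j: "j < m" "a \<in> C j" using ab(1) by (auto simp: K_def)
    have "b \<in> C j"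
    proof (rule ccontr)
      assume "b \<notin> C j"
      then obtain i where "i < m" "i \<noteq> j" "b \<in> C i" using ab(2) by (auto simp: K_def)
      hence "\<delta> j \<le> dist a b" using \<delta>(2)[OF j(2)] by blast
      thus False using \<rho>le[OF j(1)] ab(3) by linarith
    qed
    hence "Phi a \<in> P j" "Phi b \<in> P j" using j C(2) by (auto simp: A_def)
    thus ?thesis by (rule Ps)
  qed
  show ?thesis using Kc \<rho>pos Km good by (intro exI[of _ K] exI[of _ \<rho>]) simp
qed


lemma cmpp_basic:
  fixes mu :: "'a::metric_space measure"
  assumes "cmpp_system mu T Tinv"
  shows "compact (UNIV::'a::metric_space set)" "continuous_on UNIV T" "continuous_on UNIV Tinv"
    "\<And>x. T (Tinv x) = x" "\<And>x. Tinv (T x) = x" "sets mu = sets borel" "prob_space mu"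
    "distr mu mu T = mu"
  using assms by (auto simp: cmpp_system_def homeomorphism_def)

lemma funpow_cont:
  fixes f :: "'a::topological_space \<Rightarrow> 'a"
  shows "continuous_on UNIV f \<Longrightarrow> continuous_on UNIV (f ^^ k)"
proof (induction k)
  case 0
  have "f ^^ 0 = (\<lambda>x. x)" by (simp add: fun_eq_iff)
  then show ?case by (simp add: continuous_on_id)
next
  case (Suc k)
  have "continuous_on UNIV (f \<circ> (f ^^ k))"
    using Suc by (intro continuous_on_compose) (auto intro: continuous_on_subset)
  then show ?case by simp
qed

lemma iter_cont: "continuous_on UNIV T \<Longrightarrow> continuous_on UNIV Tinv \<Longrightarrow> continuous_on UNIV (iter_int T Tinv n)"
  by (simp add: iter_int_def funpow_cont)

lemma meas_of_cont: "sets M = sets borel \<Longrightarrow> continuous_on UNIV f \<Longrightarrow> f \<in> measurable M M"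
  using borel_measurable_continuous_onI measurable_cong_sets by metis

lemma funpow_preserve:
  assumes R: "R \<in> measurable M M" and d: "distr M M R = M"
  shows "(R ^^ k) \<in> measurable M M \<and> distr M M (R ^^ k) = M"
proof (induction k)
  case 0 then show ?case by (simp add: id_def)
next
  case (Suc k)
  hence m: "(R ^^ k) \<in> measurable M M" and dk: "distr M M (R ^^ k) = M" by auto
  have "distr M M (R \<circ> (R ^^ k)) = distr (distr M M (R ^^ k)) M R"
    using distr_distr[OF R m] by simp
  also have "\<dots> = M" using dk d by simp
  finally show ?case using measurable_comp[OF m R] by (simp add: comp_def)
qed

lemma inv_preserve:
  assumes R: "R \<in> measurable M M" and Ri: "Ri \<in> measurable M M" and d: "distr M M R = M"
    and inv: "\<And>x. Ri (R x) = x"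
  shows "distr M M Ri = M"
proof -
  have "distr M M Ri = distr (distr M M R) M Ri" using d by simp
  also have "\<dots> = distr M M (Ri \<circ> R)" using distr_distr[OF Ri R] by simp
  also have "Ri \<circ> R = (\<lambda>x. x)" using inv by (auto simp: fun_eq_iff)
  finally show ?thesis by simp
qed

lemma AE_equiv_funpow:
  assumes R: "R \<in> measurable M M" and d: "distr M M R = M"
    and eq: "AE x in M. Phi (R x) = R' (Phi x)"
  shows "AE x in M. Phi ((R ^^ k) x) = (R' ^^ k) (Phi x)"
proof (induction k)
  case 0 then show ?case by simp
next
  case (Suc k)
  have pk: "(R ^^ k) \<in> measurable M M" "distr M M (R ^^ k) = M" using funpow_preserve[OF R d] by auto
  have "AE x in distr M M (R ^^ k). Phi (R x) = R' (Phi x)" by (subst pk(2)) (rule eq)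
  hence "AE x in M. Phi (R ((R ^^ k) x)) = R' (Phi ((R ^^ k) x))" by (rule AE_distrD[OF pk(1)])
  with Suc show ?case by eventually_elim simp
qed

lemma cmpp_preserve:
  assumes "cmpp_system mu T Tinv"
  shows "T \<in> measurable mu mu" "Tinv \<in> measurable mu mu" "distr mu mu T = mu" "distr mu mu Tinv = mu"
proof -
  note b = cmpp_basic[OF assms]
  show T: "T \<in> measurable mu mu" by (rule meas_of_cont[OF b(6) b(2)])
  show Ti: "Tinv \<in> measurable mu mu" by (rule meas_of_cont[OF b(6) b(3)])
  show "distr mu mu T = mu" by (rule b(8))
  show "distr mu mu Tinv = mu" by (rule inv_preserve[OF T Ti b(8) b(5)])
qed

lemma iter_meas: "cmpp_system mu T Tinv \<Longrightarrow> iter_int T Tinv n \<in> measurable mu mu"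
  using cmpp_basic[of mu T Tinv] by (simp add: iter_int_def meas_of_cont funpow_cont)

lemma iter_preserve:
  assumes "cmpp_system mu T Tinv"
  shows "distr mu mu (iter_int T Tinv n) = mu"
  using funpow_preserve[OF cmpp_preserve(1,3)[OF assms]] funpow_preserve[OF cmpp_preserve(2,4)[OF assms]]
  by (simp add: iter_int_def)

lemma AE_equiv_iter:
  assumes X: "cmpp_system mu T Tinv" and Y: "cmpp_system nu S Sinv"
    and eq: "AE x in mu. Phi (T x) = S (Phi x)"
  shows "AE x in mu. \<forall>n::int. Phi (iter_int T Tinv n x) = iter_int S Sinv n (Phi x)"
proof -
  note bX = cmpp_basic[OF X] and bY = cmpp_basic[OF Y]
  have "AE x in distr mu mu Tinv. Phi (T x) = S (Phi x)" by (subst cmpp_preserve(4)[OF X]) (rule eq)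
  hence "AE x in mu. Phi (T (Tinv x)) = S (Phi (Tinv x))"
    by (rule AE_distrD[OF cmpp_preserve(2)[OF X]])
  hence eqi: "AE x in mu. Phi (Tinv x) = Sinv (Phi x)"
  proof eventually_elim
    case (elim x)
    hence "Phi x = S (Phi (Tinv x))" using bX(4) by simp
    hence "Sinv (Phi x) = Sinv (S (Phi (Tinv x)))" by simp
    thus ?case using bY(5) by simp
  qed
  have "AE x in mu. Phi (iter_int T Tinv n x) = iter_int S Sinv n (Phi x)" for n
  proof (cases "n \<ge> 0")
    case True then show ?thesis
      using AE_equiv_funpow[OF cmpp_preserve(1,3)[OF X] eq, of "nat n"] by (simp add: iter_int_def)
  next
    case False then show ?thesis
      using AE_equiv_funpow[OF cmpp_preserve(2,4)[OF X] eqi, of "nat (-n)"] by (simp add: iter_int_def)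
  qed
  then show ?thesis by (simp add: AE_all_countable)
qed

lemma dyn_cont:
  assumes "cmpp_system mu T Tinv"
  shows "continuous_on UNIV (dyn_dist T Tinv I x)"
proof -
  note b = cmpp_basic[OF assms]
  have "continuous_on UNIV (\<lambda>y. \<Sum>n\<in>I. dist (iter_int T Tinv n x) (iter_int T Tinv n y))"
    by (intro continuous_intros iter_cont b(2,3))
  then show ?thesis by (simp add: dyn_dist_def[abs_def])
qed

lemma pw_bound:
  fixes Phi :: "'a::metric_space \<Rightarrow> 'b::metric_space"
  assumes good: "\<And>a b. a\<in>K \<Longrightarrow> b\<in>K \<Longrightarrow> dist a b < \<rho> \<Longrightarrow> dist (Phi a) (Phi b) < \<epsilon>"
    and D: "\<And>u v. dist (u::'b) v \<le> D" and \<rho>: "\<rho> > 0" and e: "\<epsilon> > 0"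
  shows "dist (Phi a) (Phi b) \<le> \<epsilon> + D * indicator (-K) a + D * indicator (-K) b + (D/\<rho>) * dist a b"
proof -
  have D0: "D \<ge> 0" using D[of "Phi a" "Phi a"] by simp
  have t: "0 \<le> (D/\<rho>) * dist a b" using D0 \<rho> by simp
  have i1: "0 \<le> D * indicator (-K) a" "0 \<le> D * indicator (-K) b" using D0 by auto
  show ?thesis
  proof (cases "a \<in> K \<and> b \<in> K \<and> dist a b < \<rho>")
    case True
    then show ?thesis using good[of a b] t i1 by linarith
  next
    case False
    moreover have "D \<le> (D/\<rho>) * dist a b" if "\<rho> \<le> dist a b"
    proof -
      have "D = (D/\<rho>) * \<rho>" using \<rho> by simp
      also have "\<dots> \<le> (D/\<rho>) * dist a b" using that D0 \<rho> by (intro mult_left_mono) auto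
      finally show ?thesis .
    qed
    ultimately show ?thesis using D[of "Phi a" "Phi b"] t i1 e
      by (auto simp: indicator_def not_less)
  qed
qed

lemma dyn_bound:
  fixes Phi :: "'a::metric_space \<Rightarrow> 'b::metric_space" and \<epsilon> D \<rho> :: real
  assumes pw: "\<And>a b. dist (Phi a) (Phi b) \<le> \<epsilon> + D * indicator (-K) a + D * indicator (-K) b + (D/\<rho>) * dist a b"
    and eq: "\<And>n. n \<in> I \<Longrightarrow> Phi (iter_int T Tinv n x) = iter_int S Sinv n (Phi x)"
    and eq': "\<And>n. n \<in> I \<Longrightarrow> Phi (iter_int T Tinv n x') = iter_int S Sinv n (Phi x')"
  shows "dyn_dist S Sinv I (Phi x) (Phi x') \<le> card I * \<epsilon>
     + D * (\<Sum>n\<in>I. indicator (-K) (iter_int T Tinv n x))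
     + D * (\<Sum>n\<in>I. indicator (-K) (iter_int T Tinv n x'))
     + (D/\<rho>) * dyn_dist T Tinv I x x'"
proof -
  have "dyn_dist S Sinv I (Phi x) (Phi x') = (\<Sum>n\<in>I. dist (Phi (iter_int T Tinv n x)) (Phi (iter_int T Tinv n x')))"
    unfolding dyn_dist_def using eq eq' by (intro sum.cong) auto
  also have "\<dots> \<le> (\<Sum>n\<in>I. \<epsilon> + D * indicator (-K) (iter_int T Tinv n x) + D * indicator (-K) (iter_int T Tinv n x')
      + (D/\<rho>) * dist (iter_int T Tinv n x) (iter_int T Tinv n x'))"
    by (intro sum_mono pw)
  also have "\<dots> = card I * \<epsilon>
     + D * (\<Sum>n\<in>I. indicator (-K) (iter_int T Tinv n x))
     + D * (\<Sum>n\<in>I. indicator (-K) (iter_int T Tinv n x'))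
     + (D/\<rho>) * dyn_dist T Tinv I x x'"
    by (simp add: sum.distrib sum_distrib_left dyn_dist_def)
  finally show ?thesis .
qed


lemma markov_bad:
  fixes mu :: "'a::metric_space measure" and \<theta> :: real
  assumes X: "cmpp_system mu T Tinv" and K: "closed K" and N: "N > 0" and th: "\<theta> > 0"
  shows "measure mu {x. \<theta> * N \<le> (\<Sum>n\<in>{- int N..<int N}. indicator (-K) (iter_int T Tinv n x) :: real)}
     \<le> 2 * measure mu (-K) / \<theta>"
proof -
  note b = cmpp_basic[OF X]
  interpret prob_space mu by (rule b(7))
  have sp: "space mu = UNIV" using sets_eq_imp_space_eq[OF b(6)] by simp
  have Km: "-K \<in> sets mu" using K b(6) by simp
  define A where "A n = iter_int T Tinv n -` (-K)" for n
  have ind: "(indicator (-K) (iter_int T Tinv n x) :: real) = indicator (A n) x" for n x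
    by (auto simp: indicator_def A_def)
  have Am: "A n \<in> sets mu" for n
    using measurable_sets[OF iter_meas[OF X] Km] sp by (simp add: A_def)
  have mA: "measure mu (A n) = measure mu (-K)" for n
    using measure_distr[OF iter_meas[OF X] Km, of n] iter_preserve[OF X, of n] sp by (simp add: A_def)
  define u where "u x = (\<Sum>n\<in>{- int N..<int N}. indicator (A n) x :: real)" for x
  have uint: "integrable mu u" unfolding u_def
    by (rule Bochner_Integration.integrable_sum, rule integrable_real_indicator) (use Am in \<open>auto simp: emeasure_eq_measure\<close>)
  have "(\<integral>x. u x \<partial>mu) = (\<Sum>n\<in>{- int N..<int N}. measure mu (A n))"
    unfolding u_def using Am sp by (subst Bochner_Integration.integral_sum) (auto simp: emeasure_eq_measure)
  also have "\<dots> = 2 * N * measure mu (-K)" using mA by simp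
  finally have iu: "(\<integral>x. u x \<partial>mu) = 2 * N * measure mu (-K)" .
  have "measure mu {x\<in>space mu. u x \<ge> \<theta> * N} \<le> (\<integral>x. u x \<partial>mu) / (\<theta> * N)"
    using th N by (intro integral_Markov_inequality_measure[OF uint, of UNIV]) (auto simp: sp u_def b(6) intro!: sum_nonneg)
  also have "\<dots> = 2 * measure mu (-K) / \<theta>" using iu N th by simp
  finally show ?thesis using sp ind by (simp add: u_def)
qed


lemma good_dyn:
  fixes Phi :: "'a::metric_space \<Rightarrow> 'b::metric_space" and D \<rho> \<epsilon> \<theta> \<delta> \<delta>1 :: real and N :: nat
  assumes pw: "\<And>a b. dist (Phi a) (Phi b) \<le> \<epsilon> + D * indicator (-K) a + D * indicator (-K) b + (D/\<rho>) * dist a b"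
    and eq: "\<And>n. Phi (iter_int T Tinv n x) = iter_int S Sinv n (Phi x)"
    and eq': "\<And>n. Phi (iter_int T Tinv n x') = iter_int S Sinv n (Phi x')"
    and I: "I \<subseteq> {- int N..<int N}" "card I = N"
    and bx: "(\<Sum>n\<in>{- int N..<int N}. indicator (-K) (iter_int T Tinv n x) :: real) < \<theta> * N"
    and bx': "(\<Sum>n\<in>{- int N..<int N}. indicator (-K) (iter_int T Tinv n x') :: real) < \<theta> * N"
    and Dpos: "D > 0" and \<rho>: "\<rho> > 0"
    and dX: "dyn_dist T Tinv I x x' < \<delta>1 * N"
    and par: "N * \<epsilon> + 2 * D * \<theta> * N + (D/\<rho>) * \<delta>1 * N \<le> \<delta> * N"
  shows "dyn_dist S Sinv I (Phi x) (Phi x') < \<delta> * N"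
proof -
  have fin: "finite I" using I(1) finite_subset by blast
  have s1: "(\<Sum>n\<in>I. indicator (-K) (iter_int T Tinv n x) :: real) \<le> (\<Sum>n\<in>{- int N..<int N}. indicator (-K) (iter_int T Tinv n x))"
    using I(1) by (intro sum_mono2) auto
  have s2: "(\<Sum>n\<in>I. indicator (-K) (iter_int T Tinv n x') :: real) \<le> (\<Sum>n\<in>{- int N..<int N}. indicator (-K) (iter_int T Tinv n x'))"
    using I(1) by (intro sum_mono2) auto
  have t1: "D * (\<Sum>n\<in>I. indicator (-K) (iter_int T Tinv n x) :: real) < D * (\<theta> * N)"
    using s1 bx Dpos by (intro mult_strict_left_mono) auto
  have t2: "D * (\<Sum>n\<in>I. indicator (-K) (iter_int T Tinv n x') :: real) < D * (\<theta> * N)"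
    using s2 bx' Dpos by (intro mult_strict_left_mono) auto
  have t3: "(D/\<rho>) * dyn_dist T Tinv I x x' < (D/\<rho>) * (\<delta>1 * N)"
    using dX Dpos \<rho> by (intro mult_strict_left_mono) auto
  have "dyn_dist S Sinv I (Phi x) (Phi x') \<le> card I * \<epsilon>
     + D * (\<Sum>n\<in>I. indicator (-K) (iter_int T Tinv n x))
     + D * (\<Sum>n\<in>I. indicator (-K) (iter_int T Tinv n x'))
     + (D/\<rho>) * dyn_dist T Tinv I x x'"
    by (rule dyn_bound[OF pw eq eq'])
  also have "\<dots> < N * \<epsilon> + 2 * D * \<theta> * N + (D/\<rho>) * \<delta>1 * N"
    using t1 t2 t3 I(2) by (simp add: algebra_simps)
  also have "\<dots> \<le> \<delta> * N" by (rule par)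
  finally show ?thesis .
qed

theorem mainTheorem3:
  fixes mu :: "'a::metric_space measure" and T Tinv :: "'a \<Rightarrow> 'a"
    and nu :: "'b::metric_space measure" and S Sinv :: "'b \<Rightarrow> 'b"
    and Phi :: "'a \<Rightarrow> 'b"
    and \<alpha> \<delta> \<kappa> \<kappa>' \<alpha>\<^sub>1 :: real
  assumes "cmpp_system mu T Tinv" and "cmpp_system nu S Sinv"
    and "borel_factor_map mu T nu S Phi"
    and "\<alpha> > 1" and "\<delta> > 0" and "\<kappa> > \<kappa>'" and "\<kappa>' > 0"
    and "1 \<le> \<alpha>\<^sub>1" and "\<alpha>\<^sub>1 < \<alpha>"
  shows "\<exists>\<kappa>\<^sub>1 \<delta>\<^sub>1. \<kappa>' < \<kappa>\<^sub>1 \<and> \<kappa>\<^sub>1 < \<kappa> \<and> 0 < \<delta>\<^sub>1 \<and> \<delta>\<^sub>1 < \<delta> \<and>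
     (\<forall>\<^sub>F N in sequentially.
        BICOV \<alpha>\<^sub>1 \<kappa>\<^sub>1 \<kappa>' (\<delta>\<^sub>1 * real N)
          (dyn_dist T Tinv {- int N..<0}) (dyn_dist T Tinv {0..<int N}) mu
        \<ge> BICOV \<alpha> \<kappa> \<kappa>' (\<delta> * real N)
          (dyn_dist S Sinv {- int N..<0}) (dyn_dist S Sinv {0..<int N}) nu)"
proof -
  note bX = cmpp_basic[OF assms(1)] and bY = cmpp_basic[OF assms(2)]
  have Phim: "Phi \<in> measurable mu nu" and Phid: "distr mu nu Phi = nu"
    and PhiAE: "AE x in mu. Phi (T x) = S (Phi x)"
    using assms(3) by (auto simp: borel_factor_map_def)
  have Phib: "Phi \<in> borel_measurable borel" using Phim bX(6) bY(6) by (metis measurable_cong_sets)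
  have spmu: "space mu = UNIV" using sets_eq_imp_space_eq[OF bX(6)] by simp
  interpret mu: prob_space mu by (rule bX(7))
  obtain D where Dpos: "D > 0" and D: "\<And>u v. dist (u::'b) v \<le> D"
  proof -
    have "bounded (UNIV::'b set)" using bY(1) by (rule compact_imp_bounded)
    then obtain a r where ar: "\<forall>y. dist (a::'b) y \<le> r" by (auto simp: bounded_def)
    have r0: "0 \<le> r" using ar[rule_format, of a] by simp
    have "dist u v \<le> 2*r + 1" for u v :: 'b
      using dist_triangle3[of u v a] ar[rule_format, of u] ar[rule_format, of v] by linarith
    then show ?thesis using r0 by (intro that[of "2*r+1"]) auto
  qed
  have kpos: "\<kappa> > 0" using assms(6,7) by simp
  have a0: "\<alpha> > 0" using assms(4) by simp
  have a1pos: "\<alpha>\<^sub>1 > 0" using assms(8) by simp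
  define \<eta> where "\<eta> = min ((1 - \<alpha>\<^sub>1/\<alpha>)/\<alpha>\<^sub>1) ((1 - \<kappa>'/\<kappa>)/(2*\<alpha>\<^sub>1))"
  have r1: "\<alpha>\<^sub>1/\<alpha> < 1" using assms(9) a0 by simp
  have r2: "\<kappa>'/\<kappa> < 1" using assms(6) kpos by simp
  have etapos: "\<eta> > 0" unfolding \<eta>_def using r1 r2 a1pos by simp
  have eta1: "\<alpha>\<^sub>1 * \<eta> \<le> 1 - \<alpha>\<^sub>1/\<alpha>"
  proof -
    have "\<alpha>\<^sub>1 * \<eta> \<le> \<alpha>\<^sub>1 * ((1 - \<alpha>\<^sub>1/\<alpha>)/\<alpha>\<^sub>1)" unfolding \<eta>_def using a1pos
      by (intro mult_left_mono) auto
    thus ?thesis using a1pos by simp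
  qed
  have eta2: "\<alpha>\<^sub>1 * \<eta> \<le> (1 - \<kappa>'/\<kappa>)/2"
  proof -
    have "\<alpha>\<^sub>1 * \<eta> \<le> \<alpha>\<^sub>1 * ((1 - \<kappa>'/\<kappa>)/(2*\<alpha>\<^sub>1))" unfolding \<eta>_def using a1pos
      by (intro mult_left_mono) auto
    thus ?thesis using a1pos by simp
  qed
  define \<theta> where "\<theta> = \<delta> / (6*D)"
  have thpos: "\<theta> > 0" unfolding \<theta>_def using assms(5) Dpos by simp
  define \<epsilon> where "\<epsilon> = \<delta>/3"
  have epos: "\<epsilon> > 0" unfolding \<epsilon>_def using assms(5) by simp
  have fin: "finite_measure mu" by (rule mu.finite_measure_axioms)
  obtain K \<rho> where K: "closed K" "\<rho> > 0" "measure mu (-K) < \<eta>*\<theta>/2"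
    and Kg: "\<forall>a\<in>K. \<forall>b\<in>K. dist a b < \<rho> \<longrightarrow> dist (Phi a) (Phi b) < \<epsilon>"
    using lusin[OF bX(1) bY(1) bX(6) fin Phib epos, of "\<eta>*\<theta>/2"] etapos thpos by auto
  have pw: "\<And>a b. dist (Phi a) (Phi b) \<le> \<epsilon> + D * indicator (-K) a + D * indicator (-K) b + (D/\<rho>) * dist a b"
    using Kg by (intro pw_bound[OF _ D K(2) epos]) auto
  define \<delta>1 where "\<delta>1 = min (\<delta>/2) (\<rho>*\<delta>/(3*D))"
  define \<kappa>1 where "\<kappa>1 = (1 - \<alpha>\<^sub>1*\<eta>)*\<kappa>"
  have d1pos: "0 < \<delta>1" unfolding \<delta>1_def using assms(5) K(2) Dpos by simp
  have d1lt: "\<delta>1 < \<delta>" unfolding \<delta>1_def using assms(5) by simp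
  have k1lt: "\<kappa>1 < \<kappa>" unfolding \<kappa>1_def using a1pos etapos kpos by simp
  have k1gt: "\<kappa>' < \<kappa>1"
  proof -
    have "(1 - (1 - \<kappa>'/\<kappa>)/2) * \<kappa> \<le> (1 - \<alpha>\<^sub>1*\<eta>)*\<kappa>"
      using eta2 kpos by (intro mult_right_mono) auto
    moreover have "(1 - (1 - \<kappa>'/\<kappa>)/2) * \<kappa> = (\<kappa> + \<kappa>')/2" using kpos by (simp add: field_simps)
    ultimately have h: "(\<kappa> + \<kappa>')/2 \<le> (1 - \<alpha>\<^sub>1*\<eta>)*\<kappa>" by simp
    have "\<kappa>' < (\<kappa> + \<kappa>')/2" using assms(6) by simp
    thus ?thesis unfolding \<kappa>1_def using h by (rule order.strict_trans2)
  qed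
  obtain Nset where Nset: "{x\<in>space mu. \<not>(\<forall>n::int. Phi (iter_int T Tinv n x) = iter_int S Sinv n (Phi x))} \<subseteq> Nset"
    "emeasure mu Nset = 0" "Nset \<in> sets mu"
    using AE_equiv_iter[OF assms(1,2) PhiAE] by (rule AE_E)
  have iterb: "iter_int T Tinv n \<in> borel_measurable borel" for n
    using iter_cont[OF bX(2,3)] by (rule borel_measurable_continuous_onI)
  have ev: "BICOV \<alpha> \<kappa> \<kappa>' (\<delta> * real N) (dyn_dist S Sinv {- int N..<0}) (dyn_dist S Sinv {0..<int N}) nu
     \<le> BICOV \<alpha>\<^sub>1 \<kappa>1 \<kappa>' (\<delta>1 * real N) (dyn_dist T Tinv {- int N..<0}) (dyn_dist T Tinv {0..<int N}) mu"
    if N1: "1 \<le> N" for N :: nat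
  proof -
    define bad where "bad x = (\<Sum>n\<in>{- int N..<int N}. indicator (-K) (iter_int T Tinv n x) :: real)" for x
    define G where "G = -Nset \<inter> {x. bad x < \<theta> * N}"
    have badm: "bad \<in> borel_measurable borel" unfolding bad_def
      using K(1) by (intro borel_measurable_sum measurable_compose[OF iterb borel_measurable_indicator]) auto
    have Nb: "Nset \<in> sets borel" using Nset(3) bX(6) by simp
    have Lb: "{x. bad x < \<theta> * N} \<in> sets borel"
    proof -
      have "{x. bad x < \<theta> * N} = bad -` {..<\<theta> * N}" by auto
      thus ?thesis using measurable_sets[OF badm, of "{..<\<theta> * N}"] by simp
    qed
    have Lb2: "{x. \<theta> * N \<le> bad x} \<in> sets borel"
    proof -
      have "{x. \<theta> * N \<le> bad x} = bad -` {\<theta> * N..}" by auto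
      thus ?thesis using measurable_sets[OF badm, of "{\<theta> * N..}"] by simp
    qed
    have Gb: "G \<in> sets borel" unfolding G_def using Nb Lb by auto
    have "-G = Nset \<union> {x. \<theta> * N \<le> bad x}" unfolding G_def by auto
    hence "measure mu (-G) \<le> measure mu Nset + measure mu {x. \<theta> * N \<le> bad x}"
      using Nb Lb2 bX(6) by (simp add: measure_Un_le)
    also have "measure mu Nset = 0" using Nset(2) by (simp add: mu.emeasure_eq_measure)
    also have "measure mu {x. \<theta> * N \<le> bad x} \<le> 2 * measure mu (-K) / \<theta>"
      unfolding bad_def using markov_bad[OF assms(1) K(1) _ thpos, of N] N1 by simp
    also have "2 * measure mu (-K) / \<theta> < 2 * (\<eta>*\<theta>/2) / \<theta>"
      using K(3) thpos by (intro divide_strict_right_mono) auto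
    also have "\<dots> = \<eta>" using thpos by simp
    finally have mG: "measure mu (-G) \<le> \<eta>" by simp
    have par: "N * \<epsilon> + 2 * D * \<theta> * N + (D/\<rho>) * \<delta>1 * N \<le> \<delta> * N"
    proof -
      have "(D/\<rho>) * \<delta>1 \<le> (D/\<rho>) * (\<rho>*\<delta>/(3*D))" unfolding \<delta>1_def using Dpos K(2)
        by (intro mult_left_mono) auto
      also have "\<dots> = \<delta>/3" using Dpos K(2) by simp
      finally have A: "(D/\<rho>) * \<delta>1 * N \<le> \<delta>/3 * N" by (intro mult_right_mono) auto
      have "2 * D * \<theta> = \<delta>/3" unfolding \<theta>_def using Dpos by simp
      hence B: "2 * D * \<theta> * N = \<delta>/3 * N" by simp
      have C: "N * \<epsilon> = \<delta>/3 * N" by (simp add: \<epsilon>_def)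
      show ?thesis using A B C by linarith
    qed
    have eqG: "\<And>n. Phi (iter_int T Tinv n x) = iter_int S Sinv n (Phi x)" if "x \<in> G" for x
      using that Nset(1) spmu unfolding G_def by blast
    have badG: "bad x < \<theta> * N" if "x \<in> G" for x using that unfolding G_def by blast
    have card1: "card {- int N..<0} = N" and card2: "card {0..<int N} = N" by simp_all
    show ?thesis
    proof (rule bicov_compare[OF bX(7,6) bY(7,6) Phim Phid Gb mG])
      show "0 \<le> \<eta>" using etapos by simp
      show "1 \<le> \<alpha>\<^sub>1" by (rule assms(8))
      show "0 < \<alpha>" by (rule a0)
      show "\<alpha>\<^sub>1/\<alpha> \<le> 1 - \<alpha>\<^sub>1*\<eta>" using eta1 by simp
      show "0 \<le> \<kappa>" using kpos by simp
      show "\<kappa>1 \<le> (1 - \<alpha>\<^sub>1*\<eta>) * \<kappa>" by (simp add: \<kappa>1_def)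
      show "\<And>y. continuous_on UNIV (dyn_dist S Sinv {- int N..<0} y)" by (rule dyn_cont[OF assms(2)])
      show "\<And>y. continuous_on UNIV (dyn_dist S Sinv {0..<int N} y)" by (rule dyn_cont[OF assms(2)])
      fix x x' assume x: "x \<in> G" and x': "x' \<in> G"
      {
        assume "dyn_dist T Tinv {- int N..<0} x x' < \<delta>1 * real N"
        then show "dyn_dist S Sinv {- int N..<0} (Phi x) (Phi x') < \<delta> * real N"
          using badG[OF x] badG[OF x'] eqG[OF x] eqG[OF x']
          by (intro good_dyn[OF pw _ _ _ card1 _ _ Dpos K(2) _ par]) (auto simp: bad_def)
      }
      {
        assume "dyn_dist T Tinv {0..<int N} x x' < \<delta>1 * real N"
        then show "dyn_dist S Sinv {0..<int N} (Phi x) (Phi x') < \<delta> * real N"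
          using badG[OF x] badG[OF x'] eqG[OF x] eqG[OF x']
          by (intro good_dyn[OF pw _ _ _ card2 _ _ Dpos K(2) _ par]) (auto simp: bad_def)
      }
    qed
  qed
  have "\<forall>\<^sub>F N in sequentially.
        BICOV \<alpha>\<^sub>1 \<kappa>1 \<kappa>' (\<delta>1 * real N)
          (dyn_dist T Tinv {- int N..<0}) (dyn_dist T Tinv {0..<int N}) mu
        \<ge> BICOV \<alpha> \<kappa> \<kappa>' (\<delta> * real N)
          (dyn_dist S Sinv {- int N..<0}) (dyn_dist S Sinv {0..<int N}) nu"
    unfolding eventually_sequentially using ev by blast
  then show ?thesis using k1gt k1lt d1pos d1lt by blast
qed

end
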